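(* Let $(L,\le,(\sqsubseteq_\alpha)_{\alpha<\kappa})$ be a model of Axioms 1–4. Let $\alpha<\kappa$ and let $(x_\beta)_{\beta<\alpha}$ be a partial compatible sequence. Let $x=\bigvee_{\beta<\alpha}x_\beta$. Then: - $x$ is the $\le$-least element of $(x]_\alpha$; - $x\sqsubseteq_\alpha z$ for all $z\in(x]_\alpha$; - the sequence $(y_\delta)_{\delta<\kappa}$, defined by $y_\beta=x_\beta$ for $\beta<\alpha$ and $y_\delta=x$ for $\alpha\le\delta<\kappa$, is a compatible sequence.
   Context: Setting (model of Axioms 1–4). Let $(L,\le)$ be a complete lattice with join operation $\bigvee$ and least element $\perp$. Let $\kappa>0$ be an ordinal, and for each ordinal $\alpha<\kappa$ let $\sqsubseteq_\alpha$ be a preorder on $L$. Derived relation: $x=_\alpha y$ means $x\sqsubseteq_\alpha y$ and $y\sqsubseteq_\alpha x$. Derived sets, for $x\in L$ and $\alpha<\kappa$: - $(x]_\alpha=\{y\in L:\forall\beta<\alpha,\ x=_\beta y\}$. - $[x]_\alpha=\{y\in L: x=_\alpha y\}$. For a set $X$, $X\sqsubseteq_\alpha y$ means $x\sqsubseteq_\alpha y$ for all $x\in X$. The structure is a model of Axioms 1–4 if: - (A1) for all $\alpha<\beta<\kappa$, $x\sqsubseteq_\beta y$ implies $x=_\alpha y$; - (A2) $\bigcap_{\alpha<\kappa}=_\alpha$ is the identity relation on $L$; - (A3) for every $x\in L$, every $\alpha<\kappa$ and every $X\subseteq(x]_\alpha$ there is $y\in(x]_\alpha$ with $X\sqsubseteq_\alpha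 y$ such that for all $z\in(x]_\alpha$ with $X\sqsubseteq_\alpha z$ we have $y\sqsubseteq_\alpha z$ and $y\le z$; - (A4) for every nonempty $X\subseteq L$, every $\alpha<\kappa$ and every $y\in L$, if $y=_\alpha x$ for all $x\in X$ then $y=_\alpha\bigvee X$. A sequence $(x_\alpha)_{\alpha<\kappa}$ in $L$ is compatible if each $x_\alpha$ is the $\le$-least element of $[x_\alpha]_\alpha$ and $x_\alpha=_\alpha x_\beta$ for all $\alpha<\beta<\kappa$. For an ordinal $\alpha\le\kappa$, a sequence $(x_\beta)_{\beta<\alpha}$ is a partial compatible sequence if each $x_\beta$ is the $\le$-least element of $[x_\beta]_\beta$ and $x_\beta=_\beta x_\gamma$ for all $\beta<\gamma<\alpha$. *)

theory Defs
  imports Main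
begin

text \<open>Ordinals below kappa are modelled by a type 'i of class wellorder
  (kappa = order type of 'i; kappa > 0 since types are nonempty).
  The family of preorders is  R :: 'i => 'a => 'a => bool,  R \<alpha> x y meaning x \<sqsubseteq>_\<alpha> y.\<close>

definition eqa :: "('i \<Rightarrow> 'a \<Rightarrow> 'a \<Rightarrow> bool) \<Rightarrow> 'i \<Rightarrow> 'a \<Rightarrow> 'a \<Rightarrow> bool" where
  "eqa R \<alpha> x y \<longleftrightarrow> R \<alpha> x y \<and> R \<alpha> y x"

definition down_set :: "('i::wellorder \<Rightarrow> 'a \<Rightarrow> 'a \<Rightarrow> bool) \<Rightarrow> 'a \<Rightarrow> 'i \<Rightarrow> 'a set" where
  "down_set R x \<alpha> = {y. \<forall>\<beta><\<alpha>. eqa R \<beta> x y}"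

definition cls_set :: "('i \<Rightarrow> 'a \<Rightarrow> 'a \<Rightarrow> bool) \<Rightarrow> 'a \<Rightarrow> 'i \<Rightarrow> 'a set" where
  "cls_set R x \<alpha> = {y. eqa R \<alpha> x y}"

definition is_least_in :: "'a::order set \<Rightarrow> 'a \<Rightarrow> bool" where
  "is_least_in S x \<longleftrightarrow> x \<in> S \<and> (\<forall>z\<in>S. x \<le> z)"

definition model_axioms :: "('i::wellorder \<Rightarrow> 'a::complete_lattice \<Rightarrow> 'a \<Rightarrow> bool) \<Rightarrow> bool" where
  "model_axioms R \<longleftrightarrow>
     (\<forall>\<alpha>. reflp (R \<alpha>) \<and> transp (R \<alpha>)) \<and>
     (\<forall>\<alpha> \<beta> x y. \<alpha> < \<beta> \<longrightarrow> R \<beta> x y \<longrightarrow> eqa R \<alpha> x y) \<and>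
     (\<forall>x y. (\<forall>\<alpha>. eqa R \<alpha> x y) \<longrightarrow> x = y) \<and>
     (\<forall>x \<alpha> X. X \<subseteq> down_set R x \<alpha> \<longrightarrow>
        (\<exists>y\<in>down_set R x \<alpha>. (\<forall>u\<in>X. R \<alpha> u y) \<and>
           (\<forall>z\<in>down_set R x \<alpha>. (\<forall>u\<in>X. R \<alpha> u z) \<longrightarrow> R \<alpha> y z \<and> y \<le> z))) \<and>
     (\<forall>X \<alpha> y. X \<noteq> {} \<longrightarrow> (\<forall>x\<in>X. eqa R \<alpha> y x) \<longrightarrow> eqa R \<alpha> y (Sup X))"

definition compatible_seq :: "('i::wellorder \<Rightarrow> 'a::complete_lattice \<Rightarrow> 'a \<Rightarrow> bool) \<Rightarrow> ('i \<Rightarrow> 'a) \<Rightarrow> bool" where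
  "compatible_seq R xs \<longleftrightarrow>
     (\<forall>\<alpha>. is_least_in (cls_set R (xs \<alpha>) \<alpha>) (xs \<alpha>)) \<and>
     (\<forall>\<alpha> \<beta>. \<alpha> < \<beta> \<longrightarrow> eqa R \<alpha> (xs \<alpha>) (xs \<beta>))"

text \<open>Partial compatible sequence indexed by \<beta> < \<alpha> (values at \<beta> \<ge> \<alpha> are irrelevant).\<close>
definition partial_compatible_seq :: "('i::wellorder \<Rightarrow> 'a::complete_lattice \<Rightarrow> 'a \<Rightarrow> bool) \<Rightarrow> 'i \<Rightarrow> ('i \<Rightarrow> 'a) \<Rightarrow> bool" where
  "partial_compatible_seq R \<alpha> xs \<longleftrightarrow>
     (\<forall>\<beta><\<alpha>. is_least_in (cls_set R (xs \<beta>) \<beta>) (xs \<beta>)) \<and>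
     (\<forall>\<beta> \<gamma>. \<beta> < \<gamma> \<longrightarrow> \<gamma> < \<alpha> \<longrightarrow> eqa R \<beta> (xs \<beta>) (xs \<gamma>))"

end

theory Submission
  imports Defs
begin

theorem mainTheorem11:
  fixes R :: "'i::wellorder \<Rightarrow> 'a::complete_lattice \<Rightarrow> 'a \<Rightarrow> bool"
    and \<alpha> :: 'i and xs :: "'i \<Rightarrow> 'a"
  assumes "model_axioms R"
    and "partial_compatible_seq R \<alpha> xs"
  defines "x \<equiv> Sup (xs ` {\<beta>. \<beta> < \<alpha>})"
  shows "is_least_in (down_set R x \<alpha>) x
         \<and> (\<forall>z\<in>down_set R x \<alpha>. R \<alpha> x z)
         \<and> compatible_seq R (\<lambda>\<delta>. if \<delta> < \<alpha> then xs \<delta> else x)"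
proof -
  note ax = assms(1)[unfolded model_axioms_def]
  have pre: "\<And>a. reflp (R a) \<and> transp (R a)" using conjunct1[OF ax] by blast
  have A1: "\<And>a b u v. a < b \<Longrightarrow> R b u v \<Longrightarrow> eqa R a u v"
    using conjunct1[OF conjunct2[OF ax]] by blast
  have A3: "\<And>u a X. X \<subseteq> down_set R u a \<Longrightarrow>
        (\<exists>y\<in>down_set R u a. (\<forall>w\<in>X. R a w y) \<and>
           (\<forall>z\<in>down_set R u a. (\<forall>w\<in>X. R a w z) \<longrightarrow> R a y z \<and> y \<le> z))"
  proof -
    fix u a X assume "X \<subseteq> down_set R u a"
    then show "(\<exists>y\<in>down_set R u a. (\<forall>w\<in>X. R a w y) \<and>
           (\<forall>z\<in>down_set R u a. (\<forall>w\<in>X. R a w z) \<longrightarrow> R a y z \<and> y \<le> z))"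
      using conjunct1[OF conjunct2[OF conjunct2[OF conjunct2[OF ax]]]] by (elim allE impE)
  qed
  have A4: "\<And>X a y. X \<noteq> {} \<Longrightarrow> (\<forall>u\<in>X. eqa R a y u) \<Longrightarrow> eqa R a y (Sup X)"
    using conjunct2[OF conjunct2[OF conjunct2[OF conjunct2[OF ax]]]] by blast
  have refl: "\<And>a u. eqa R a u u" using pre unfolding eqa_def reflp_def by blast
  have sym: "\<And>a u v. eqa R a u v \<Longrightarrow> eqa R a v u" unfolding eqa_def by blast
  have trans: "\<And>a u v w. eqa R a u v \<Longrightarrow> eqa R a v w \<Longrightarrow> eqa R a u w"
    using pre unfolding eqa_def transp_def by blast
  have least: "\<And>b. b < \<alpha> \<Longrightarrow> is_least_in (cls_set R (xs b) b) (xs b)"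
    and comp: "\<And>b c. b < c \<Longrightarrow> c < \<alpha> \<Longrightarrow> eqa R b (xs b) (xs c)"
    using assms(2) unfolding partial_compatible_seq_def by blast+
  have leastD: "\<And>b z. b < \<alpha> \<Longrightarrow> eqa R b (xs b) z \<Longrightarrow> xs b \<le> z"
    using least unfolding is_least_in_def cls_set_def by blast
  have mono: "\<And>b c. b < c \<Longrightarrow> c < \<alpha> \<Longrightarrow> xs b \<le> xs c"
    using comp leastD by (meson order.strict_trans)
  have xeq: "eqa R b (xs b) x" if b: "b < \<alpha>" for b
  proof -
    have "x = Sup (xs ` {c. b \<le> c \<and> c < \<alpha>})"
    proof (rule antisym)
      show "x \<le> Sup (xs ` {c. b \<le> c \<and> c < \<alpha>})" unfolding x_def
      proof (rule Sup_least)
        fix u assume "u \<in> xs ` {\<beta>. \<beta> < \<alpha>}"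
        then obtain c where c: "c < \<alpha>" "u = xs c" by blast
        show "u \<le> Sup (xs ` {c. b \<le> c \<and> c < \<alpha>})"
        proof (cases "b \<le> c")
          case True then show ?thesis using c by (intro Sup_upper) auto
        next
          case False
          then have "u \<le> xs b" using c b mono by auto
          also have "xs b \<le> Sup (xs ` {c. b \<le> c \<and> c < \<alpha>})" using b by (intro Sup_upper) auto
          finally show ?thesis .
        qed
      qed
      show "Sup (xs ` {c. b \<le> c \<and> c < \<alpha>}) \<le> x" unfolding x_def by (rule Sup_subset_mono) auto
    qed
    moreover have "eqa R b (xs b) (Sup (xs ` {c. b \<le> c \<and> c < \<alpha>}))"
    proof (rule A4)
      show "xs ` {c. b \<le> c \<and> c < \<alpha>} \<noteq> {}" using b by auto
      show "\<forall>u\<in>xs ` {c. b \<le> c \<and> c < \<alpha>}. eqa R b (xs b) u"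
        proof
        fix u assume "u \<in> xs ` {c. b \<le> c \<and> c < \<alpha>}"
        then obtain c where c: "b \<le> c" "c < \<alpha>" "u = xs c" by blast
        show "eqa R b (xs b) u"
        proof (cases "b = c")
          case True then show ?thesis using c refl by simp
        next
          case False then show ?thesis using c comp by simp
        qed
      qed
    qed
    ultimately show ?thesis by simp
  qed
  have xin: "x \<in> down_set R x \<alpha>" unfolding down_set_def using refl by blast
  obtain y where y: "y \<in> down_set R x \<alpha>" "\<And>z. z \<in> down_set R x \<alpha> \<Longrightarrow> R \<alpha> y z \<and> y \<le> z"
    using A3[of "{}" x \<alpha>] by auto
  have "x \<le> y" unfolding x_def
  proof (rule Sup_least)
    fix u assume "u \<in> xs ` {\<beta>. \<beta> < \<alpha>}"
    then obtain c where c: "c < \<alpha>" "u = xs c" by blast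
    have "eqa R c x y" using y(1) c unfolding down_set_def by blast
    then have "eqa R c (xs c) y" using xeq[OF c(1)] trans by blast
    then show "u \<le> y" using leastD c by blast
  qed
  then have xy: "x = y" using y(2)[OF xin] by simp
  have P1: "is_least_in (down_set R x \<alpha>) x" unfolding is_least_in_def using xin y(2) xy by blast
  have P2: "\<forall>z\<in>down_set R x \<alpha>. R \<alpha> x z" using y(2) xy by blast
  have P3: "compatible_seq R (\<lambda>\<delta>. if \<delta> < \<alpha> then xs \<delta> else x)"
    unfolding compatible_seq_def
  proof (intro conjI allI impI)
    fix d
    show "is_least_in (cls_set R ((\<lambda>\<delta>. if \<delta> < \<alpha> then xs \<delta> else x) d) d) ((\<lambda>\<delta>. if \<delta> < \<alpha> then xs \<delta> else x) d)"
    proof (cases "d < \<alpha>")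
      case True then show ?thesis using least by simp
    next
      case False
      have "x \<le> z" if z: "eqa R d x z" for z
      proof -
        have "z \<in> down_set R x \<alpha>" unfolding down_set_def
        proof (intro CollectI allI impI)
          fix b assume "b < \<alpha>" then have "b < d" using False by auto
          then show "eqa R b x z" using A1 z unfolding eqa_def by blast
        qed
        then show ?thesis using P1 unfolding is_least_in_def by blast
      qed
      then show ?thesis using False refl unfolding is_least_in_def cls_set_def by simp
    qed
  next
    fix a b :: 'i assume ab: "a < b"
    show "eqa R a ((\<lambda>\<delta>. if \<delta> < \<alpha> then xs \<delta> else x) a) ((\<lambda>\<delta>. if \<delta> < \<alpha> then xs \<delta> else x) b)"
    proof (cases "b < \<alpha>")
      case True then show ?thesis using ab comp by (simp add: order.strict_trans)
    next
      case False
      show ?thesis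
      proof (cases "a < \<alpha>")
        case True then show ?thesis using False xeq by simp
      next
        case False2: False then show ?thesis using False refl by simp
      qed
    qed
  qed
  show ?thesis using P1 P2 P3 by blast
qed

end
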